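(* For every $\lambda>\lambda^*$, $e(\lambda)>-\frac{1}{\gamma b^*}$, where $b^*=\max_{1\le j\le n}b_j$.
   Context: Standing setup. Let $\gamma>0$; let $a_1,\dots,a_p>0$ with weights $\omega_i>0$, $\sum_i\omega_i=1$, and $b_1,\dots,b_n>0$ with weights $\pi_j>0$, $\sum_j\pi_j=1$. Let $\mu$ be the limiting spectral distribution of $\mathbf{N}\mathbf{N}^T$ where $\mathbf{N}=\mathbf{A}^{1/2}\mathbf{G}\mathbf{B}^{1/2}$ is $k\times l$, $\mathbf{G}$ has iid mean-zero entries of variance $1/l$, $k/l\to\gamma$, and the spectral distributions of $\mathbf{A},\mathbf{B}$ converge to $\nu=\sum_i\omega_i\delta_{a_i}$ and $\underline{\nu}=\sum_j\pi_j\delta_{b_j}$. $\mu$ is a compactly supported probability measure on $[0,\infty)$; $\lambda^*>0$ is the right endpoint of its support, and $s(\lambda)=\int\frac{d\mu(t)}{t-\lambda}$ for $\lambda>\lambda^*$. Define $G(e)=\sum_{j=1}^n\frac{b_j\pi_j}{1+\gamma b_j e}$. It is known (master equations) that there is a continuous (indeed smooth) real function $e(\lambda)$ on $(\lambda^*,\infty)$, never equal to a pole $-1/(\gamma b_j)$ of $G$ and with $a_iG(e(\lambda))\ne\lambda$, satisfying $s(\lambda)=\sum_{i=1}^p\frac{\omega_i}{a_iG(e(\lambda))-\lambda}$ and $e(\lambda)=\sum_{i=1}^p\frac{a_i\omega_i}{a_iG(e(\lambda))-\lambda}$. *)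

theory Defs
  imports "HOL-Probability.Probability"
begin

definition msupport :: "real measure \<Rightarrow> real set" where
  "msupport \<mu> = {x. \<forall>r>0. 0 < emeasure \<mu> {x - r <..< x + r}}"

definition stieltjes :: "real measure \<Rightarrow> real \<Rightarrow> real" where
  "stieltjes \<mu> l = (\<integral>t. 1 / (t - l) \<partial>\<mu>)"

definition Gfun :: "real \<Rightarrow> nat \<Rightarrow> (nat \<Rightarrow> real) \<Rightarrow> (nat \<Rightarrow> real) \<Rightarrow> real \<Rightarrow> real" where
  "Gfun \<gamma> n b \<pi> x = (\<Sum>j=1..n. b j * \<pi> j / (1 + \<gamma> * b j * x))"

end

theory Submission imports Defs begin

lemma AE_msupport:
  assumes sb: "sets \<mu> = sets borel"
  shows "AE x in \<mu>. x \<in> msupport \<mu>"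
proof -
  define S where "S = {p :: rat \<times> rat. emeasure \<mu> {real_of_rat (fst p) <..< real_of_rat (snd p)} = 0}"
  define N where "N = (\<Union>p\<in>S. {real_of_rat (fst p) <..< real_of_rat (snd p)})"
  have "N \<in> null_sets \<mu>"
    unfolding N_def
  proof (rule null_sets_UN')
    show "countable S" by (rule countable_subset[of _ UNIV]) auto
    fix p assume "p \<in> S"
    then show "{real_of_rat (fst p)<..<real_of_rat (snd p)} \<in> null_sets \<mu>"
      using sb by (auto simp: S_def null_sets_def sets_eq_imp_space_eq)
  qed
  moreover have "{x \<in> space \<mu>. x \<notin> msupport \<mu>} \<subseteq> N"
  proof
    fix x assume "x \<in> {x \<in> space \<mu>. x \<notin> msupport \<mu>}"
    then obtain r where r: "r > 0" "\<not> 0 < emeasure \<mu> {x - r <..< x + r}"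
      by (auto simp: msupport_def)
    then have z: "emeasure \<mu> {x - r <..< x + r} = 0" by (simp add: zero_less_iff_neq_zero)
    obtain q1 where q1: "q1 \<in> \<rat>" "x - r < q1" "q1 < x" using Rats_dense_in_real[of "x - r" x] r by auto
    obtain q2 where q2: "q2 \<in> \<rat>" "x < q2" "q2 < x + r" using Rats_dense_in_real[of x "x + r"] r by auto
    obtain u1 where u1: "q1 = real_of_rat u1" using q1(1) Rats_cases by blast
    obtain u2 where u2: "q2 = real_of_rat u2" using q2(1) Rats_cases by blast
    have "emeasure \<mu> {q1<..<q2} \<le> emeasure \<mu> {x - r <..< x + r}"
      by (rule emeasure_mono) (use q1 q2 sb in auto)
    then have "(u1, u2) \<in> S" using z u1 u2 by (simp add: S_def)
    then show "x \<in> N" using q1 q2 u1 u2 unfolding N_def by force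
  qed
  ultimately show ?thesis by (rule AE_I')
qed

lemma stieltjes_lb:
  assumes "prob_space \<mu>" "sets \<mu> = sets borel" "AE x in \<mu>. x \<in> msupport \<mu>"
    "\<forall>x\<in>msupport \<mu>. 0 \<le> x \<and> x \<le> lstar" "l > lstar"
  shows "stieltjes \<mu> l \<ge> - 1 / (l - lstar)"
proof -
  interpret prob_space \<mu> by fact
  have ae: "AE t in \<mu>. 0 \<le> t \<and> t \<le> lstar" using assms(3) by (rule eventually_mono) (use assms(4) in auto)
  have meas: "(\<lambda>t. 1 / (t - l)) \<in> borel_measurable \<mu>"
    using assms(2) by (subst measurable_cong_sets[of \<mu> borel "borel::real measure" borel]) auto
  have bnd: "AE t in \<mu>. norm (1 / (t - l)) \<le> 1 / (l - lstar)"
    using ae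
  proof eventually_elim
    case (elim t)
    then have "l - t \<ge> l - lstar" "l - lstar > 0" using assms(5) by auto
    then have "1 / (l - t) \<le> 1 / (l - lstar)" by (intro divide_left_mono) auto
    moreover have "norm (1 / (t - l)) = 1 / (l - t)" using elim assms(5) by (simp add: abs_if divide_simps)
    ultimately show ?case by simp
  qed
  have int: "integrable \<mu> (\<lambda>t. 1 / (t - l))"
    by (rule integrable_const_bound[OF bnd meas])
  have "(\<integral>t. - 1 / (l - lstar) \<partial>\<mu>) \<le> (\<integral>t. 1 / (t - l) \<partial>\<mu>)"
  proof (rule integral_mono_AE)
    show "AE t in \<mu>. - 1 / (l - lstar) \<le> 1 / (t - l)"
      using bnd by eventually_elim (unfold real_norm_def abs_le_iff, linarith)
  qed (use int in auto)
  then show ?thesis by (simp add: stieltjes_def prob_space)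
qed

theorem corollary3p4:
  fixes \<gamma> lstar :: real and p n :: nat and a \<omega> b \<pi> :: "nat \<Rightarrow> real"
    and \<mu> :: "real measure" and e :: "real \<Rightarrow> real"
  assumes "\<gamma> > 0"
    and "\<forall>i\<in>{1..p}. a i > 0 \<and> \<omega> i > 0" and "(\<Sum>i=1..p. \<omega> i) = 1"
    and "\<forall>j\<in>{1..n}. b j > 0 \<and> \<pi> j > 0" and "(\<Sum>j=1..n. \<pi> j) = 1"
    and "prob_space \<mu>" and "sets \<mu> = sets borel"
    and "compact (msupport \<mu>)" and "msupport \<mu> \<subseteq> {0..}"
    and "lstar = Sup (msupport \<mu>)" and "lstar > 0"
    and "continuous_on {lstar<..} e"
    and "\<forall>l>lstar. \<forall>j\<in>{1..n}. e l \<noteq> - 1 / (\<gamma> * b j)"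
    and "\<forall>l>lstar. \<forall>i\<in>{1..p}. a i * Gfun \<gamma> n b \<pi> (e l) \<noteq> l"
    and "\<forall>l>lstar. stieltjes \<mu> l = (\<Sum>i=1..p. \<omega> i / (a i * Gfun \<gamma> n b \<pi> (e l) - l))"
    and "\<forall>l>lstar. e l = (\<Sum>i=1..p. a i * \<omega> i / (a i * Gfun \<gamma> n b \<pi> (e l) - l))"
  shows "\<forall>l>lstar. e l > - 1 / (\<gamma> * Max (b ` {1..n}))"
proof -
  note g0 = assms(1)
  have "n \<noteq> 0" using assms(5) by (cases "n = 0") auto
  define B where "B = Max (b ` {1..n})"
  have "B \<in> b ` {1..n}" unfolding B_def using \<open>n \<noteq> 0\<close> by (intro Max_in) auto
  then obtain jm where jm: "jm \<in> {1..n}" "b jm = B" by auto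
  have B0: "B > 0" using jm assms(4) by auto
  define c where "c = - 1 / (\<gamma> * B)"
  have c0: "c < 0" using B0 g0 unfolding c_def by (intro divide_neg_pos mult_pos_pos) auto
  have cne: "\<forall>l>lstar. e l \<noteq> c" using assms(13) jm by (auto simp: c_def)
  have supp: "\<forall>x\<in>msupport \<mu>. 0 \<le> x \<and> x \<le> lstar"
  proof
    fix x assume x: "x \<in> msupport \<mu>"
    have "bdd_above (msupport \<mu>)" using assms(8) by (simp add: compact_imp_bounded bounded_imp_bdd_above)
    then have "x \<le> lstar" using x assms(10) by (simp add: cSup_upper)
    then show "0 \<le> x \<and> x \<le> lstar" using x assms(9) by auto
  qed
  have AEs: "AE x in \<mu>. x \<in> msupport \<mu>" by (rule AE_msupport[OF assms(7)])
  define A where "A = (\<Sum>i=1..p. a i)"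
  define M where "M = (\<Sum>i=1..p. a i * \<omega> i)"
  have "p \<noteq> 0" using assms(3) by (cases "p = 0") auto
  have A0: "A > 0" unfolding A_def using assms(2) \<open>p \<noteq> 0\<close> by (intro sum_pos) auto
  have M0: "M > 0" unfolding M_def using assms(2) \<open>p \<noteq> 0\<close> by (intro sum_pos) auto
  have aA: "a i \<le> A" if "i \<in> {1..p}" for i
    unfolding A_def by (intro member_le_sum) (use assms(2) that in \<open>auto simp: less_imp_le\<close>)
  define K where "K = 4 * A * lstar * \<gamma> * B"
  define L where "L = 2 * lstar + 2 * M * \<gamma> * B + K + 1"
  have K0: "K > 0" unfolding K_def using A0 assms(11) g0 B0 by (intro mult_pos_pos) auto
  have big: "e l > c" if lL: "l \<ge> L" for l
  proof (rule ccontr)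
    assume "\<not> e l > c"
    then have el: "e l \<le> c" by simp
    have MgB: "M * \<gamma> * B > 0" using M0 g0 B0 by (intro mult_pos_pos) auto
    have l1: "l \<ge> 1" "l \<ge> 2 * lstar" "l > 2 * M * \<gamma> * B" "l \<ge> K"
      using lL K0 MgB assms(11) by (auto simp: L_def)
    have ll: "l > lstar" using l1 assms(11) by simp
    define g where "g = Gfun \<gamma> n b \<pi> (e l)"
    define d where "d i = a i * g - l" for i
    have dne: "d i \<noteq> 0" if "i \<in> {1..p}" for i using assms(14) ll that by (auto simp: d_def g_def)
    have s_eq: "stieltjes \<mu> l = (\<Sum>i=1..p. \<omega> i / d i)" using assms(15) ll by (simp add: d_def g_def)
    have e_eq: "e l = (\<Sum>i=1..p. a i * \<omega> i / d i)" using assms(16) ll by (simp add: d_def g_def)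
    have ident: "g * e l - l * stieltjes \<mu> l = 1"
    proof -
      have "g * e l - l * stieltjes \<mu> l = (\<Sum>i=1..p. \<omega> i * (a i * g - l) / d i)"
        unfolding s_eq e_eq by (simp add: sum_distrib_left sum_subtractf[symmetric] algebra_simps diff_divide_distrib)
      also have "\<dots> = (\<Sum>i=1..p. \<omega> i)"
        by (rule sum.cong) (use dne in \<open>auto simp: d_def\<close>)
      finally show ?thesis using assms(3) by simp
    qed
    have slb: "stieltjes \<mu> l \<ge> - 1 / (l - lstar)"
      by (rule stieltjes_lb[OF assms(6,7) AEs supp ll])
    have lpos: "l > 0" using ll assms(11) by simp
    have "l * stieltjes \<mu> l \<ge> l * (- 1 / (l - lstar))"
      using slb lpos by (intro mult_left_mono) auto
    then have ge: "g * e l \<ge> - lstar / (l - lstar)" using ident ll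
      by (simp add: field_simps)
    have en: "- e l \<ge> - c" using el by simp
    have gb: "g \<le> lstar / ((l - lstar) * (- c))"
    proof (cases "g \<le> 0")
      case True
      have "(l - lstar) * (- c) > 0" using ll c0 by (intro mult_pos_pos) auto
      then have "lstar / ((l - lstar) * (- c)) \<ge> 0" using assms(11) by (intro divide_nonneg_pos) auto
      then show ?thesis using True by linarith
    next
      case False
      then have "g * (- c) \<le> g * (- e l)" using en by (intro mult_left_mono) auto
      also have "\<dots> \<le> lstar / (l - lstar)" using ge by simp
      finally have "g * (- c) \<le> lstar / (l - lstar)" .
      then show ?thesis using c0 ll by (simp add: field_simps)
    qed
    have "lstar / ((l - lstar) * (- c)) = lstar * \<gamma> * B / (l - lstar)"
      using c0 g0 B0 ll by (simp add: c_def field_simps)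
    also have "\<dots> \<le> lstar * \<gamma> * B / (l / 2)"
      using l1 ll assms(11) g0 B0 by (intro divide_left_mono) auto
    also have "\<dots> \<le> l / (2 * A)"
    proof -
      have "l * 1 \<le> l * l" using l1 by (intro mult_left_mono) auto
      then have "l * l \<ge> K" using l1 by linarith
      then show ?thesis using lpos A0 by (simp add: K_def field_simps)
    qed
    finally have gA: "g \<le> l / (2 * A)" using gb by linarith
    have tmb: "a i * \<omega> i / d i \<ge> - 2 * (a i * \<omega> i) / l" if i: "i \<in> {1..p}" for i
    proof -
      have ai: "a i > 0" "\<omega> i > 0" using assms(2) i by auto
      have "a i * g \<le> a i * (l / (2 * A))" using gA ai by (intro mult_left_mono) auto
      also have "\<dots> \<le> A * (l / (2 * A))" using aA[OF i] lpos A0 by (intro mult_right_mono) auto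
      also have "\<dots> = l / 2" using A0 by simp
      finally have "d i \<le> - l / 2" by (simp add: d_def)
      then have "- d i \<ge> l / 2" by simp
      moreover have "- d i > 0" using \<open>- d i \<ge> l / 2\<close> lpos by linarith
      ultimately have "1 / (- d i) \<le> 1 / (l / 2)" using lpos by (intro divide_left_mono mult_pos_pos) auto
      then have "1 / (- d i) \<le> 2 / l" by simp
      then have "(a i * \<omega> i) * (1 / (- d i)) \<le> (a i * \<omega> i) * (2 / l)"
        using ai by (intro mult_left_mono) auto
      moreover have "a i * \<omega> i / d i = - ((a i * \<omega> i) * (1 / (- d i)))" by simp
      moreover have "- 2 * (a i * \<omega> i) / l = - ((a i * \<omega> i) * (2 / l))" by simp
      ultimately show ?thesis by linarith
    qed
    have "e l \<ge> (\<Sum>i=1..p. - 2 * (a i * \<omega> i) / l)"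
      unfolding e_eq by (rule sum_mono) (rule tmb)
    also have "(\<Sum>i=1..p. - 2 * (a i * \<omega> i) / l) = - 2 * M / l"
    proof -
      have "(\<Sum>i=1..p. - 2 * (a i * \<omega> i) / l) = (\<Sum>i=1..p. (- 2 / l) * (a i * \<omega> i))"
        by (rule sum.cong) auto
      also have "\<dots> = (- 2 / l) * M" by (simp add: M_def sum_distrib_left)
      finally show ?thesis by simp
    qed
    finally have "e l \<ge> - 2 * M / l" .
    moreover have "- 2 * M / l > c"
      using l1 lpos g0 B0 by (simp add: c_def field_simps)
    ultimately show False using el by simp
  qed
  have MgB': "M * \<gamma> * B > 0" using M0 g0 B0 by (intro mult_pos_pos) auto
  have LL: "L > lstar" using K0 MgB' assms(11) unfolding L_def by linarith
  show ?thesis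
  proof (intro allI impI)
    fix l assume l: "l > lstar"
    show "e l > - 1 / (\<gamma> * Max (b ` {1..n}))"
    proof (rule ccontr)
      assume "\<not> ?thesis"
      then have "e l \<le> c" by (simp add: c_def B_def)
      then have elc: "e l < c" using cne l by force
      show False
      proof (cases "l \<le> L")
        case True
        have "continuous_on {l..L} e" using assms(12) by (rule continuous_on_subset) (use l in auto)
        then obtain x where "x \<ge> l" "x \<le> L" "e x = c"
          using IVT'[of e l c L] elc big[of L] True by auto
        then show False using cne l by auto
      next
        case False
        have "continuous_on {L..l} e" using assms(12) by (rule continuous_on_subset) (use LL in auto)
        then obtain x where "x \<ge> L" "x \<le> l" "e x = c"
          using IVT2'[of e l c L] elc big[of L] False by auto
        then show False using cne LL by auto
      qed
    qed
  qed
qed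

end
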